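(* Let $A,B,C,D,E,F$ be six points on a rectangular hyperbola $\mathcal{H}$. Suppose that the triangles $ABC$ and $DEF$ are orthologic, and that one of the two orthology centers lies on $\mathcal{H}$. Then the other orthology center also lies on $\mathcal{H}$.
   Context: A rectangular hyperbola is a hyperbola with perpendicular asymptotes. Triangles $ABC$ and $DEF$ are orthologic if the perpendiculars from $D,E,F$ to $BC, CA, AB$ respectively are concurrent; in that case the perpendiculars from $A,B,C$ to $EF, FD, DE$ respectively are also concurrent. The two points of concurrency are called the orthology centers. *)

theory Defs
  imports Complex_Main
begin

type_synonym point = "real \<times> real"

definition dot :: "point \<Rightarrow> point \<Rightarrow> real" where
  "dot p q = fst p * fst q + snd p * snd q"

definition vsub :: "point \<Rightarrow> point \<Rightarrow> point" where
  "vsub p q = (fst p - fst q, snd p - snd q)"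

definition triangle :: "point \<Rightarrow> point \<Rightarrow> point \<Rightarrow> bool" where
  "triangle A B C \<longleftrightarrow>
     (fst B - fst A) * (snd C - snd A) - (snd B - snd A) * (fst C - fst A) \<noteq> 0"

definition conic :: "real \<Rightarrow> real \<Rightarrow> real \<Rightarrow> real \<Rightarrow> real \<Rightarrow> real \<Rightarrow> point set" where
  "conic a b c d e f = {(x, y). a * x^2 + b * x * y + c * y^2 + d * x + e * y + f = 0}"

text \<open>Determinant of the symmetric matrix of the conic (non-zero iff non-degenerate).\<close>
definition conic_det :: "real \<Rightarrow> real \<Rightarrow> real \<Rightarrow> real \<Rightarrow> real \<Rightarrow> real \<Rightarrow> real" where
  "conic_det a b c d e f =
     a * (c * f - (e/2)^2) - (b/2) * ((b/2) * f - (e/2) * (d/2))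
     + (d/2) * ((b/2) * (e/2) - c * (d/2))"

text \<open>A rectangular hyperbola: a non-degenerate conic which is a hyperbola
  (discriminant b^2 - 4ac > 0) with perpendicular asymptotes (a + c = 0).\<close>
definition rect_hyperbola :: "point set \<Rightarrow> bool" where
  "rect_hyperbola H \<longleftrightarrow> (\<exists>a b c d e f. H = conic a b c d e f \<and>
      a + c = 0 \<and> b^2 - 4 * a * c > 0 \<and> conic_det a b c d e f \<noteq> 0)"

definition orthology_center :: "point \<Rightarrow> point \<Rightarrow> point \<Rightarrow> point \<Rightarrow> point \<Rightarrow> point \<Rightarrow> point \<Rightarrow> bool" where
  "orthology_center A B C D E F P \<longleftrightarrow>
     dot (vsub P D) (vsub C B) = 0 \<and>
     dot (vsub P E) (vsub A C) = 0 \<and>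
     dot (vsub P F) (vsub B A) = 0"

definition orthologic :: "point \<Rightarrow> point \<Rightarrow> point \<Rightarrow> point \<Rightarrow> point \<Rightarrow> point \<Rightarrow> bool" where
  "orthologic A B C D E F \<longleftrightarrow> (\<exists>P. orthology_center A B C D E F P)"

end

theory Submission imports Defs begin

lemma lin2:
  fixes x y a1 b1 a2 b2 :: real
  assumes "a1*x + b1*y = 0" "a2*x + b2*y = 0" "a1*b2 - a2*b1 \<noteq> 0"
  shows "x = 0 \<and> y = 0"
proof -
  have "(a1*b2 - a2*b1) * x = 0" using assms(1,2)
  proof -
    have "(a1*b2 - a2*b1) * x = b2*(a1*x + b1*y) - b1*(a2*x+b2*y)" by (simp add: algebra_simps)
    then show ?thesis using assms by simp
  qed
  moreover have "(a1*b2 - a2*b1) * y = 0" using assms(1,2)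
  proof -
    have "(a1*b2 - a2*b1) * y = a1*(a2*x + b2*y) - a2*(a1*x+b1*y)" by (simp add: algebra_simps)
    then show ?thesis using assms by simp
  qed
  ultimately show ?thesis using assms(3) by simp
qed

lemma hdot:
  fixes k s u v w :: real
  assumes "s \<noteq> 0" "u \<noteq> 0" "v \<noteq> 0" "w \<noteq> 0"
  shows "dot (vsub (s,k/s) (u,k/u)) (vsub (w,k/w) (v,k/v)) = (s-u)*(w-v)*(1 + k^2/(s*u*v*w))"
  using assms unfolding dot_def vsub_def by (simp add: field_simps power2_eq_square)

lemma hdot0:
  fixes k s u v w :: real
  assumes "s \<noteq> 0" "u \<noteq> 0" "v \<noteq> 0" "w \<noteq> 0" "w \<noteq> v"
    "dot (vsub (s,k/s) (u,k/u)) (vsub (w,k/w) (v,k/v)) = 0"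
  shows "s = u \<or> s*u*v*w = -(k^2)"
proof -
  have "(s-u)*(w-v)*(1 + k^2/(s*u*v*w)) = 0" using hdot[of s u v w k] assms by simp
  then have "s = u \<or> 1 + k^2/(s*u*v*w) = 0" using assms(5) by auto
  then show ?thesis using assms(1-4) by (auto simp: field_simps)
qed

lemma uniq:
  fixes k s u1 v1 w1 u2 v2 w2 :: real and Q :: point
  assumes "k \<noteq> 0" "s \<noteq> 0" "u1 \<noteq> 0" "v1 \<noteq> 0" "w1 \<noteq> 0" "u2 \<noteq> 0" "v2 \<noteq> 0" "w2 \<noteq> 0"
    "w1 \<noteq> v1" "w2 \<noteq> v2" "w1*v1 \<noteq> w2*v2"
    "dot (vsub Q (u1,k/u1)) (vsub (w1,k/w1) (v1,k/v1)) = 0"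
    "dot (vsub Q (u2,k/u2)) (vsub (w2,k/w2) (v2,k/v2)) = 0"
    "s*u1*v1*w1 = -(k^2)" "s*u2*v2*w2 = -(k^2)"
  shows "fst Q * snd Q = k"
proof -
  obtain x y where Q: "Q = (x,y)" by (cases Q)
  have r1: "dot (vsub (s,k/s) (u1,k/u1)) (vsub (w1,k/w1) (v1,k/v1)) = 0"
    using hdot[of s u1 v1 w1 k] assms by simp
  have r2: "dot (vsub (s,k/s) (u2,k/u2)) (vsub (w2,k/w2) (v2,k/v2)) = 0"
    using hdot[of s u2 v2 w2 k] assms by simp
  have e1: "(w1-v1)*(x-s) + (k/w1-k/v1)*(y-k/s) = 0"
    using assms(12) r1 unfolding Q dot_def vsub_def by (simp add: algebra_simps)
  have e2: "(w2-v2)*(x-s) + (k/w2-k/v2)*(y-k/s) = 0"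
    using assms(13) r2 unfolding Q dot_def vsub_def by (simp add: algebra_simps)
  have det: "(w1-v1)*(k/w2-k/v2) - (w2-v2)*(k/w1-k/v1) = (w1-v1)*(w2-v2)*k*(w2*v2 - w1*v1)/(w1*v1*w2*v2)"
    using assms by (simp add: field_simps)
  have "(w1-v1)*(k/w2-k/v2) - (w2-v2)*(k/w1-k/v1) \<noteq> 0"
    unfolding det using assms by simp
  then have "x - s = 0 \<and> y - k/s = 0" using lin2[OF e1 e2] by simp
  then show ?thesis using Q assms(2) by simp
qed

lemma core:
  fixes k a b c d e f :: real and P Q :: point
  assumes k: "k \<noteq> 0" and nz: "a \<noteq> 0" "b \<noteq> 0" "c \<noteq> 0" "d \<noteq> 0" "e \<noteq> 0" "f \<noteq> 0"
    and dist: "distinct [a,b,c,d,e,f]"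
    and oP: "orthology_center (a,k/a) (b,k/b) (c,k/c) (d,k/d) (e,k/e) (f,k/f) P"
    and oQ: "orthology_center (d,k/d) (e,k/e) (f,k/f) (a,k/a) (b,k/b) (c,k/c) Q"
    and PH: "fst P * snd P = k"
  shows "fst Q * snd Q = k"
proof -
  obtain t y where P: "P = (t,y)" by (cases P)
  have t0: "t \<noteq> 0" using PH P k by auto
  have y: "y = k/t" using PH P t0 by (simp add: field_simps)
  have P': "P = (t, k/t)" using P y by simp
  have p1: "t = d \<or> t*d*b*c = -(k^2)"
    using hdot0[of t d b c k] oP nz t0 dist unfolding orthology_center_def P' by auto
  have p2: "t = e \<or> t*e*c*a = -(k^2)"
    using hdot0[of t e c a k] oP nz t0 dist unfolding orthology_center_def P' by auto
  have p3: "t = f \<or> t*f*a*b = -(k^2)"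
    using hdot0[of t f a b k] oP nz t0 dist unfolding orthology_center_def P' by auto
  have qA: "dot (vsub Q (a,k/a)) (vsub (f,k/f) (e,k/e)) = 0"
   and qB: "dot (vsub Q (b,k/b)) (vsub (d,k/d) (f,k/f)) = 0"
   and qC: "dot (vsub Q (c,k/c)) (vsub (e,k/e) (d,k/d)) = 0"
    using oQ unfolding orthology_center_def by auto
  have k2: "k^2 \<noteq> 0" using k by simp
  show ?thesis
  proof (cases "t = d")
    case True
    then have h2: "t*e*c*a = -(k^2)" and h3: "t*f*a*b = -(k^2)" using p2 p3 dist by auto
    have "(t*a)*(e*c) = (t*a)*(f*b)" using h2 h3 by (simp add: mult_ac)
    then have ce: "e*c = f*b" using t0 nz by simp
    define s where "s = -(k^2)/(b*f*d)"
    have s0: "s \<noteq> 0" using s_def k2 nz by simp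
    have sB: "s*b*f*d = -(k^2)" using nz unfolding s_def by (simp add: field_simps)
    have "s*c*d*e = s*d*(e*c)" by (simp add: mult_ac)
    also have "\<dots> = s*d*(f*b)" using ce by simp
    also have "\<dots> = s*b*f*d" by (simp add: mult_ac)
    finally have sC: "s*c*d*e = -(k^2)" using sB by simp
    show ?thesis
      using uniq[OF k s0 nz(2) nz(6) nz(4) nz(3) nz(4) nz(5) _ _ _ qB qC sB sC] dist nz ce
      by auto
  next
    case nd: False
    show ?thesis
    proof (cases "t = e")
      case True
      then have h1: "t*d*b*c = -(k^2)" and h3: "t*f*a*b = -(k^2)" using p1 p3 dist nd by auto
      have "(t*b)*(d*c) = (t*b)*(f*a)" using h1 h3 by (simp add: mult_ac)
      then have ce: "d*c = f*a" using t0 nz by simp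
      define s where "s = -(k^2)/(a*e*f)"
      have s0: "s \<noteq> 0" using s_def k2 nz by simp
      have sA: "s*a*e*f = -(k^2)" using nz unfolding s_def by (simp add: field_simps)
      have "s*c*d*e = s*e*(d*c)" by (simp add: mult_ac)
      also have "\<dots> = s*e*(f*a)" using ce by simp
      also have "\<dots> = s*a*e*f" by (simp add: mult_ac)
      finally have sC: "s*c*d*e = -(k^2)" using sA by simp
      show ?thesis
        using uniq[OF k s0 nz(1) nz(5) nz(6) nz(3) nz(4) nz(5) _ _ _ qA qC sA sC] dist nz ce
        by auto
    next
      case ne: False
      show ?thesis
      proof (cases "t = f")
        case True
        then have h1: "t*d*b*c = -(k^2)" and h2: "t*e*c*a = -(k^2)" using p1 p2 dist nd ne by auto
        have "(t*c)*(d*b) = (t*c)*(e*a)" using h1 h2 by (simp add: mult_ac)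
        then have ce: "d*b = e*a" using t0 nz by simp
        define s where "s = -(k^2)/(a*e*f)"
        have s0: "s \<noteq> 0" using s_def k2 nz by simp
        have sA: "s*a*e*f = -(k^2)" using nz unfolding s_def by (simp add: field_simps)
        have "s*b*f*d = s*f*(d*b)" by (simp add: mult_ac)
        also have "\<dots> = s*f*(e*a)" using ce by simp
        also have "\<dots> = s*a*e*f" by (simp add: mult_ac)
        finally have sB: "s*b*f*d = -(k^2)" using sA by simp
        show ?thesis
          using uniq[OF k s0 nz(1) nz(5) nz(6) nz(2) nz(6) nz(4) _ _ _ qA qB sA sB] dist nz ce
          by auto
      next
        case False
        then have h1: "t*d*b*c = -(k^2)" and h2: "t*e*c*a = -(k^2)" and h3: "t*f*a*b = -(k^2)"
          using p1 p2 p3 nd ne by auto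
        define s where "s = -(k^2)/(a*e*f)"
        have s0: "s \<noteq> 0" using s_def k2 nz by simp
        have sA: "s*a*e*f = -(k^2)" using nz unfolding s_def by (simp add: field_simps)
        have "t*(d*b*c) = t*(e*c*a)" using h1 h2 by (simp add: mult_ac)
        then have m1: "d*b*c = e*c*a" using t0 mult_left_cancel by blast
        have "(a*e*f) * (b*c) = f*b*(e*c*a)" by (simp add: mult_ac)
        also have "\<dots> = f*b*(d*b*c)" by (simp only: m1)
        also have "\<dots> = (b*f*d) * (b*c)" by (simp add: mult_ac)
        finally have "a*e*f = b*f*d" using nz by simp
        then have "s*(b*f*d) = s*(a*e*f)" by (simp only:)
        then have sB: "s*b*f*d = -(k^2)" using sA by (simp only: mult.assoc)
        show ?thesis
          using uniq[OF k s0 nz(1) nz(5) nz(6) nz(2) nz(6) nz(4) _ _ _ qA qB sA sB] dist nz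
          by auto
      qed
    qed
  qed
qed

lemma core_pts:
  fixes k :: real and A B C D E F P Q :: point
  assumes k: "k \<noteq> 0"
    and h: "fst A * snd A = k" "fst B * snd B = k" "fst C * snd C = k"
      "fst D * snd D = k" "fst E * snd E = k" "fst F * snd F = k"
    and dist: "distinct [A,B,C,D,E,F]"
    and oP: "orthology_center A B C D E F P"
    and oQ: "orthology_center D E F A B C Q"
    and PH: "fst P * snd P = k"
  shows "fst Q * snd Q = k"
proof -
  have rep: "X = (fst X, k / fst X) \<and> fst X \<noteq> 0" if "fst X * snd X = k" for X :: point
  proof -
    have "fst X \<noteq> 0" using that k by auto
    then show ?thesis using that by (cases X) (auto simp: field_simps)
  qed
  have dist': "distinct [fst A, fst B, fst C, fst D, fst E, fst F]"
  proof -
    have "fst X \<noteq> fst Y" if "X \<noteq> Y" "fst X * snd X = k" "fst Y * snd Y = k" for X Y :: point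
      using rep[OF that(2)] rep[OF that(3)] that(1) by metis
    then show ?thesis using dist h by auto
  qed
  have oP': "orthology_center (fst A, k/fst A) (fst B, k/fst B) (fst C, k/fst C) (fst D, k/fst D) (fst E, k/fst E) (fst F, k/fst F) P"
    using oP rep[OF h(1)] rep[OF h(2)] rep[OF h(3)] rep[OF h(4)] rep[OF h(5)] rep[OF h(6)] by simp
  have oQ': "orthology_center (fst D, k/fst D) (fst E, k/fst E) (fst F, k/fst F) (fst A, k/fst A) (fst B, k/fst B) (fst C, k/fst C) Q"
    using oQ rep[OF h(1)] rep[OF h(2)] rep[OF h(3)] rep[OF h(4)] rep[OF h(5)] rep[OF h(6)] by simp
  show ?thesis
    using core[OF k _ _ _ _ _ _ dist' oP' oQ' PH] rep[OF h(1)] rep[OF h(2)] rep[OF h(3)] rep[OF h(4)] rep[OF h(5)] rep[OF h(6)]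
    by blast
qed

lemma get_pq:
  fixes a b :: real
  assumes "b^2 + 4*a^2 > 0"
  obtains p q where "p*q = -a" "p^2 - q^2 = b" "p^2 + q^2 > 0"
proof -
  define z where "z = csqrt (Complex b (-2*a))"
  have z2: "z^2 = Complex b (-2*a)" unfolding z_def by (rule power2_csqrt)
  have r: "Re z ^2 - Im z ^2 = b" using arg_cong[OF z2, of Re] by (simp add: power2_eq_square)
  have i: "2 * Re z * Im z = -2*a" using arg_cong[OF z2, of Im] by (simp add: power2_eq_square)
  have "Re z * Im z = -a" using i by (simp add: mult.commute[of "Im z"])
  moreover have "Re z ^2 + Im z ^2 > 0"
  proof (rule ccontr)
    assume "\<not> ?thesis"
    then have "Re z = 0 \<and> Im z = 0" using sum_power2_le_zero_iff by (metis not_less)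
    then show False using r i assms by auto
  qed
  ultimately show ?thesis using that r by blast
qed

theorem proposition2p6:
  fixes A B C D E F P Q :: point and H :: "point set"
  assumes "rect_hyperbola H"
    and "A \<in> H" "B \<in> H" "C \<in> H" "D \<in> H" "E \<in> H" "F \<in> H"
    and "distinct [A, B, C, D, E, F]"
    and "triangle A B C" "triangle D E F"
    and "orthologic A B C D E F"
    and "orthology_center A B C D E F P"
    and "orthology_center D E F A B C Q"
  shows "P \<in> H \<longleftrightarrow> Q \<in> H"
proof -
  obtain a b c d e f where H: "H = conic a b c d e f" and ac: "a + c = 0"
    and disc: "b^2 - 4*a*c > 0" and det: "conic_det a b c d e f \<noteq> 0"
    using assms(1) unfolding rect_hyperbola_def by blast
  have c: "c = -a" using ac by simp
  have "b^2 + 4*a^2 > 0" using disc c by (simp add: power2_eq_square)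
  then obtain p q where pq: "p*q = -a" and pq2: "p^2 - q^2 = b" and n0: "p^2 + q^2 > 0"
    by (rule get_pq)
  define n where "n = p^2 + q^2"
  have nz: "n \<noteq> 0" using n0 unfolding n_def by linarith
  define \<alpha> where "\<alpha> = (d*p + e*q)/n"
  define \<beta> where "\<beta> = (e*p - d*q)/n"
  define k where "k = \<alpha>*\<beta> - f"
  define T where "T = (\<lambda>X::point. (p*fst X + q*snd X + \<beta>, -q*fst X + p*snd X + \<alpha>))"
  have aa: "a = -(p*q)" using pq by simp
  have bb: "b = p^2 - q^2" using pq2 by simp
  have T1: "X \<in> H \<longleftrightarrow> fst (T X) * snd (T X) = k" for X
  proof -
    obtain x y where X: "X = (x,y)" by (cases X)
    have "fst (T X) * snd (T X) - k = a*x^2 + b*x*y + c*y^2 + d*x + e*y + f"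
      unfolding X T_def k_def \<alpha>_def \<beta>_def c aa bb using nz
      by (simp add: field_simps) (simp add: n_def algebra_simps power2_eq_square)
    then show ?thesis unfolding H conic_def X by auto
  qed
  have T2: "dot (vsub (T X) (T Y)) (vsub (T Z) (T W)) = n * dot (vsub X Y) (vsub Z W)" for X Y Z W
    unfolding T_def dot_def vsub_def n_def by (simp add: algebra_simps power2_eq_square)
  have T3: "conic_det a b c d e f = n^2 * k / 4"
    unfolding conic_det_def k_def \<alpha>_def \<beta>_def c aa bb using nz
    by (simp add: field_simps) (simp add: n_def algebra_simps power2_eq_square eval_nat_numeral)
  have k0: "k \<noteq> 0" using det T3 by auto
  have Tinj: "T X = T Y \<Longrightarrow> X = Y" for X Y
  proof -
    assume "T X = T Y"
    then have "dot (vsub (T X) (T Y)) (vsub (T X) (T Y)) = 0" unfolding dot_def vsub_def by simp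
    then have "dot (vsub X Y) (vsub X Y) = 0" using T2 nz by simp
    then show "X = Y" unfolding dot_def vsub_def
      by (cases X, cases Y) (simp add: sum_squares_eq_zero_iff)
  qed
  have OC: "orthology_center (T A1) (T B1) (T C1) (T D1) (T E1) (T F1) (T P1)"
    if "orthology_center A1 B1 C1 D1 E1 F1 P1" for A1 B1 C1 D1 E1 F1 P1
    using that unfolding orthology_center_def T2 by simp
  have dT: "distinct [T A, T B, T C, T D, T E, T F]"
  proof -
    have "inj T" using Tinj by (rule injI)
    then show ?thesis using assms(8) by (simp add: inj_eq)
  qed
  have dT': "distinct [T D, T E, T F, T A, T B, T C]"
    using dT by auto
  have hs: "fst (T A) * snd (T A) = k" "fst (T B) * snd (T B) = k" "fst (T C) * snd (T C) = k"
      "fst (T D) * snd (T D) = k" "fst (T E) * snd (T E) = k" "fst (T F) * snd (T F) = k"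
    using assms(2-7) T1 by auto
  show ?thesis
  proof
    assume "P \<in> H"
    then show "Q \<in> H" unfolding T1
      using core_pts[OF k0 hs dT OC[OF assms(12)] OC[OF assms(13)]] by blast
  next
    assume "Q \<in> H"
    then show "P \<in> H" unfolding T1
      using core_pts[OF k0 hs(4-6) hs(1-3) dT' OC[OF assms(13)] OC[OF assms(12)]] by blast
  qed
qed

end
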